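(* Let $C$ be a finite group and $G$ a group whose commutator subgroup $[G,G]$ is $C$ and whose abelianization $G/C$ is free abelian of finite rank. If $N\lhd G$ is a normal subgroup with $N\cap C$ trivial, then $N$ is contained in the center of $G$. *)

theory Defs
  imports "HOL-Algebra.Algebra" "HOL-Algebra.Free_Abelian_Groups"
begin

definition center :: "('a, 'b) monoid_scheme \<Rightarrow> 'a set" where
  "center G = {z \<in> carrier G. \<forall>g \<in> carrier G. z \<otimes>\<^bsub>G\<^esub> g = g \<otimes>\<^bsub>G\<^esub> z}"

end

theory Submission
  imports Defs
begin

lemma helper11:
  fixes G (structure)
  assumes "group G" and "N \<lhd> G" and "N \<inter> derived G (carrier G) = {\<one>}"
  shows "N \<subseteq> center G"
proof
  interpret group G by fact
  interpret normal N G by fact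
  fix n assume n: "n \<in> N"
  have nG: "n \<in> carrier G" using n by (rule mem_carrier)
  have "\<forall>g \<in> carrier G. n \<otimes> g = g \<otimes> n"
  proof
    fix g assume g: "g \<in> carrier G"
    define c where "c = n \<otimes> g \<otimes> inv n \<otimes> inv g"
    have cC: "c \<in> derived G (carrier G)" unfolding derived_def c_def
      using nG g by (auto intro!: generate.incl)
    have "g \<otimes> inv n \<otimes> inv g \<in> N"
      using inv_op_closed2[OF g subgroup.m_inv_closed[OF subgroup_axioms n]] .
    hence "n \<otimes> (g \<otimes> inv n \<otimes> inv g) \<in> N"
      using n by (simp add: subgroup.m_closed[OF subgroup_axioms])
    hence "c \<in> N" unfolding c_def using nG g by (simp add: m_assoc)
    hence c1: "c = \<one>" using cC assms(3) by blast
    have "n \<otimes> g \<otimes> inv n \<otimes> inv g \<otimes> g \<otimes> n = g \<otimes> n"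
      using c1 g nG unfolding c_def by simp
    moreover have "n \<otimes> g \<otimes> inv n \<otimes> inv g \<otimes> g \<otimes> n = n \<otimes> g"
      using g nG by (simp add: m_assoc)
    ultimately show "n \<otimes> g = g \<otimes> n" by simp
  qed
  thus "n \<in> center G" using nG unfolding center_def by simp
qed

theorem proposition11:
  fixes G :: "('a, 'b) monoid_scheme" and C N :: "'a set"
  assumes "group G"
    and "C = derived G (carrier G)"
    and "finite C"
    and "\<exists>n::nat. G Mod C \<cong> free_Abelian_group {..<n}"
    and "N \<lhd> G"
    and "N \<inter> C = {\<one>\<^bsub>G\<^esub>}"
  shows "N \<subseteq> center G"
  using helper11[of G N] assms by simp

end
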